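(* Let $y\in\mathbb{R}^n$, $\beta,\gamma>0$, $d>0$, and $\rho_\gamma:=\|\cdot\|_1-\gamma\|\cdot\|_2+\iota_D$. Then: (i) If $\|y\|_\infty>\beta$, then, with $z:=\mathcal{S}(y,\beta)$, $\mathrm{prox}_{\beta\rho_\gamma}(y)$ is the singleton consisting of $\frac{z(\|z\|_2+\beta\gamma)}{\|z\|_2}$ if $\|z\|_2\le d-\beta\gamma$, and of $\frac{zd}{\|z\|_2}$ otherwise. (ii) If $\|y\|_\infty=\beta$, then $x^\star\in\mathrm{prox}_{\beta\rho_\gamma}(y)$ if and only if $\|x^\star\|_2=\min\{\beta\gamma,d\}$, $x^\star_i=0$ for all $i$ with $|y_i|<\beta$, and $x^\star_iy_i\ge0$ for all $i$ with $|y_i|=\beta$. (iii) If $(1-\gamma)\beta<\|y\|_\infty<\beta$, then $x^\star\in\mathrm{prox}_{\beta\rho_\gamma}(y)$ if and only if $x^\star$ has at most one nonzero entry, $\|x^\star\|_2=\min\{\|y\|_\infty+(\gamma-1)\beta,d\}$, $x^\star_iy_i\ge0$ for all $i$, and $x^\star_i=0$ for all $i$ with $|y_i|<\|y\|_\infty$. (iv) If $\|y\|_\infty\le(1-\gamma)\beta$, then $\mathrm{prox}_{\beta\rho_\gamma}(y)=\{0_n\}$.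
   Context: $D:=\{x\in\mathbb{R}^n:\|x\|_2\le d\}$ and $\iota_D$ is its indicator function ($0$ on $D$, $+\infty$ otherwise). For a function $\varphi:\mathbb{R}^n\to(-\infty,+\infty]$, $\mathrm{prox}_\varphi(x):=\arg\min\{\varphi(u)+\frac12\|u-x\|_2^2:u\in\mathbb{R}^n\}$ (a set). The soft-thresholding operator $\mathcal{S}(y,\alpha)$ acts componentwise: $\mathcal{S}(y,\alpha)_i=y_i-\alpha$ if $y_i>\alpha$, $0$ if $|y_i|\le\alpha$, $y_i+\alpha$ if $y_i<-\alpha$. *)

theory Defs
  imports "HOL-Analysis.Analysis" "HOL-Library.Extended_Real"
begin

definition norm1 :: "real^'n \<Rightarrow> real" where
  "norm1 x = (\<Sum>i\<in>UNIV. \<bar>x $ i\<bar>)"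

definition ball_D :: "real \<Rightarrow> (real^'n) set" where
  "ball_D d = {x. norm x \<le> d}"

definition indicator_fn :: "'a set \<Rightarrow> 'a \<Rightarrow> ereal" where
  "indicator_fn D x = (if x \<in> D then 0 else \<infinity>)"

definition prox :: "('a::real_normed_vector \<Rightarrow> ereal) \<Rightarrow> 'a \<Rightarrow> 'a set" where
  "prox \<phi> x = {u. \<forall>v. \<phi> u + ereal ((norm (u - x))\<^sup>2 / 2) \<le> \<phi> v + ereal ((norm (v - x))\<^sup>2 / 2)}"

definition rho :: "real \<Rightarrow> real \<Rightarrow> real^'n \<Rightarrow> ereal" where
  "rho \<gamma> d x = ereal (norm1 x - \<gamma> * norm x) + indicator_fn (ball_D d) x"

definition soft :: "real^'n \<Rightarrow> real \<Rightarrow> real^'n" where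
  "soft y \<alpha> = (\<chi> i. if y $ i > \<alpha> then y $ i - \<alpha>
                      else if \<bar>y $ i\<bar> \<le> \<alpha> then 0 else y $ i + \<alpha>)"

end

theory Submission
  imports Defs
begin


definition qf :: "real \<Rightarrow> real \<Rightarrow> real^'n \<Rightarrow> real^'n \<Rightarrow> real" where
  "qf \<beta> \<gamma> y x = \<beta> * norm1 x - inner x y - \<beta> * \<gamma> * norm x + (norm x)\<^sup>2 / 2"

lemma obj_eq:
  fixes y v :: "real^'n"
  assumes "\<beta> > 0"
  shows "ereal \<beta> * rho \<gamma> d v + ereal ((norm (v - y))\<^sup>2 / 2) =
         (if norm v \<le> d then ereal (qf \<beta> \<gamma> y v + (norm y)\<^sup>2/2) else \<infinity>)"
proof -
  have e: "(norm (v - y))\<^sup>2 / 2 = (norm v)\<^sup>2/2 - inner v y + (norm y)\<^sup>2/2"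
    by (simp add: power2_norm_eq_inner inner_diff inner_commute field_simps)
  show ?thesis
    using assms by (auto simp: rho_def indicator_fn_def ball_D_def qf_def e algebra_simps)
qed

lemma prox_char:
  fixes y :: "real^'n"
  assumes "\<beta> > 0" "d \<ge> 0"
  shows "x \<in> prox (\<lambda>x. ereal \<beta> * rho \<gamma> d x) y \<longleftrightarrow>
     norm x \<le> d \<and> (\<forall>v. norm v \<le> d \<longrightarrow> qf \<beta> \<gamma> y x \<le> qf \<beta> \<gamma> y v)"
proof -
  have "x \<in> prox (\<lambda>x. ereal \<beta> * rho \<gamma> d x) y \<longleftrightarrow>
     (\<forall>v. (if norm x \<le> d then ereal (qf \<beta> \<gamma> y x + (norm y)\<^sup>2/2) else \<infinity>)
        \<le> (if norm v \<le> d then ereal (qf \<beta> \<gamma> y v + (norm y)\<^sup>2/2) else \<infinity>))"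
    unfolding prox_def obj_eq[OF assms(1)] by simp
  also have "\<dots> \<longleftrightarrow> norm x \<le> d \<and> (\<forall>v. norm v \<le> d \<longrightarrow> qf \<beta> \<gamma> y x \<le> qf \<beta> \<gamma> y v)"
  proof (cases "norm x \<le> d")
    case True
    then show ?thesis by (auto split: if_splits)
  next
    case False
    then show ?thesis using assms(2) apply simp apply (rule exI[of _ 0]) by simp
  qed
  finally show ?thesis .
qed

lemma prox_level:
  fixes y :: "real^'n"
  assumes "\<beta> > 0" "d \<ge> 0" and lb: "\<And>v. norm v \<le> d \<Longrightarrow> qf \<beta> \<gamma> y v \<ge> c"
    and w: "norm w \<le> d" "qf \<beta> \<gamma> y w = c"
  shows "x \<in> prox (\<lambda>x. ereal \<beta> * rho \<gamma> d x) y \<longleftrightarrow> norm x \<le> d \<and> qf \<beta> \<gamma> y x = c"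
  unfolding prox_char[OF assms(1,2)] using lb w by (metis order.trans order_antisym)

lemma h_min:
  fixes a d t ts :: real
  assumes "0 \<le> t" "t \<le> d" "ts = (if a \<le> 0 then 0 else min a d)"
  shows "t\<^sup>2/2 - a * t \<ge> ts\<^sup>2/2 - a * ts"
    and "t\<^sup>2/2 - a * t = ts\<^sup>2/2 - a * ts \<longleftrightarrow> t = ts"
proof -
  have "t\<^sup>2/2 - a * t \<ge> ts\<^sup>2/2 - a * ts \<and> (t\<^sup>2/2 - a * t = ts\<^sup>2/2 - a * ts \<longleftrightarrow> t = ts)"
  proof (cases "a \<le> 0")
    case True
    then have ts: "ts = 0" using assms by simp
    have "a * t \<le> 0" using True assms(1) by (simp add: mult_nonpos_nonneg)
    then have g: "t\<^sup>2/2 - a*t \<ge> t\<^sup>2/2" by linarith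
    show ?thesis
    proof (cases "t = 0")
      case True then show ?thesis using ts by simp
    next
      case False
      then have "t\<^sup>2 > 0" by simp
      then have "t\<^sup>2/2 - a*t > 0" using g by linarith
      moreover have z: "ts\<^sup>2/2 - a*ts = 0" unfolding ts by simp
      ultimately have p: "t\<^sup>2/2 - a*t > ts\<^sup>2/2 - a*ts" by linarith
      have "t \<noteq> ts" using False ts by simp
      then show ?thesis using p by auto
    qed
  next
    case False
    show ?thesis
    proof (cases "a \<le> d")
      case True
      then have ts: "ts = a" using False assms by simp
      have e: "t\<^sup>2/2 - a * t - (ts\<^sup>2/2 - a * ts) = (t - a)\<^sup>2/2"
        unfolding ts by (simp add: power2_eq_square field_simps)
      have A: "t\<^sup>2/2 - a * t \<ge> ts\<^sup>2/2 - a * ts" using e zero_le_power2[of "t - a"] by linarith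
      have "t\<^sup>2/2 - a * t = ts\<^sup>2/2 - a * ts \<longleftrightarrow> (t - a)\<^sup>2/2 = 0" using e by (intro iffI) linarith+
      also have "\<dots> \<longleftrightarrow> t = ts" using ts by simp
      finally show ?thesis using A by blast
    next
      case F2: False
      then have ts: "ts = d" using False assms by simp
      have e: "t\<^sup>2/2 - a * t - (ts\<^sup>2/2 - a * ts) = (d - t) * (a - (t + d)/2)"
        unfolding ts by (simp add: power2_eq_square field_simps)
      have p: "a - (t + d)/2 > 0" using F2 assms by simp
      have "(d - t) * (a - (t + d)/2) \<ge> 0" using p assms by simp
      moreover have "(d - t) * (a - (t + d)/2) = 0 \<longleftrightarrow> t = d" using p by auto
      ultimately show ?thesis using e ts by linarith
    qed
  qed
  then show "t\<^sup>2/2 - a * t \<ge> ts\<^sup>2/2 - a * ts"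
    and "t\<^sup>2/2 - a * t = ts\<^sup>2/2 - a * ts \<longleftrightarrow> t = ts" by auto
qed

lemma prox_decomp:
  fixes y w :: "real^'n"
  assumes "\<beta> > 0" "d \<ge> 0"
    and dec: "\<And>x. qf \<beta> \<gamma> y x = A x + B x + ((norm x)\<^sup>2/2 - a * norm x)"
    and A: "\<And>x. A x \<ge> 0" and B: "\<And>x. B x \<ge> 0"
    and w: "A w = 0" "B w = 0" "norm w = ts"
    and ts: "ts = (if a \<le> 0 then 0 else min a d)"
  shows "x \<in> prox (\<lambda>x. ereal \<beta> * rho \<gamma> d x) y \<longleftrightarrow> norm x = ts \<and> A x = 0 \<and> B x = 0"
proof -
  have tsd: "0 \<le> ts" "ts \<le> d" using ts assms(2) by auto
  have lb: "qf \<beta> \<gamma> y v \<ge> ts\<^sup>2/2 - a * ts" if "norm v \<le> d" for v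
    using h_min(1)[OF norm_ge_zero that ts] dec[of v] A[of v] B[of v] by linarith
  have wq: "qf \<beta> \<gamma> y w = ts\<^sup>2/2 - a * ts" using dec[of w] w by simp
  have "x \<in> prox (\<lambda>x. ereal \<beta> * rho \<gamma> d x) y \<longleftrightarrow> norm x \<le> d \<and> qf \<beta> \<gamma> y x = ts\<^sup>2/2 - a * ts"
    by (rule prox_level[OF assms(1,2) lb _ wq]) (use w tsd in auto)
  also have "\<dots> \<longleftrightarrow> norm x = ts \<and> A x = 0 \<and> B x = 0"
  proof
    assume h: "norm x \<le> d \<and> qf \<beta> \<gamma> y x = ts\<^sup>2/2 - a * ts"
    have m: "(norm x)\<^sup>2/2 - a * norm x \<ge> ts\<^sup>2/2 - a * ts"
      using h_min(1)[OF norm_ge_zero _ ts] h by blast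
    have "A x = 0" "B x = 0" "(norm x)\<^sup>2/2 - a * norm x = ts\<^sup>2/2 - a * ts"
      using h m dec[of x] A[of x] B[of x] by linarith+
    then show "norm x = ts \<and> A x = 0 \<and> B x = 0"
      using h_min(2)[OF norm_ge_zero _ ts] h by blast
  next
    assume "norm x = ts \<and> A x = 0 \<and> B x = 0"
    then show "norm x \<le> d \<and> qf \<beta> \<gamma> y x = ts\<^sup>2/2 - a * ts" using dec[of x] tsd by simp
  qed
  finally show ?thesis .
qed

lemma norm1_ge: "norm (x::real^'n) \<le> norm1 x"
  unfolding norm1_def by (rule norm_le_l1_cart)

lemma norm_sq_cart: "(norm (x::real^'n))\<^sup>2 = (\<Sum>i\<in>UNIV. (x$i)\<^sup>2)"
  unfolding power2_norm_eq_inner inner_vec_def by (simp add: power2_eq_square)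

lemma inner_cart: "inner (x::real^'n) y = (\<Sum>i\<in>UNIV. x$i * y$i)"
  by (simp add: inner_vec_def)

lemma norm1_eq_iff: "norm1 (x::real^'n) = norm x \<longleftrightarrow> card {i. x$i \<noteq> 0} \<le> 1"
proof -
  define D where "D = (\<Sum>i\<in>UNIV. \<Sum>j\<in>UNIV. if i = j then 0 else \<bar>x$i\<bar> * \<bar>x$j\<bar>)"
  have sq: "(norm1 x)\<^sup>2 = (norm x)\<^sup>2 + D"
  proof -
    have "(norm1 x)\<^sup>2 = (\<Sum>i\<in>UNIV. \<Sum>j\<in>UNIV. \<bar>x$i\<bar> * \<bar>x$j\<bar>)"
      unfolding norm1_def power2_eq_square by (rule sum_product)
    also have "\<dots> = (\<Sum>i\<in>UNIV. \<Sum>j\<in>UNIV. (if i = j then (x$i)\<^sup>2 else 0) + (if i = j then 0 else \<bar>x$i\<bar> * \<bar>x$j\<bar>))"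
      by (intro sum.cong refl) (auto simp: power2_eq_square abs_mult_self_eq)
    also have "\<dots> = (norm x)\<^sup>2 + D"
      unfolding D_def norm_sq_cart sum.distrib by simp
    finally show ?thesis .
  qed
  have Dnn: "D \<ge> 0" unfolding D_def by (intro sum_nonneg) auto
  have "norm1 x = norm x \<longleftrightarrow> D = 0"
  proof
    assume "norm1 x = norm x" then show "D = 0" using sq by simp
  next
    assume "D = 0"
    then have "(norm1 x)\<^sup>2 = (norm x)\<^sup>2" using sq by simp
    moreover have "norm1 x \<ge> 0" using norm1_ge[of x] norm_ge_zero[of x] by linarith
    ultimately show "norm1 x = norm x" by (simp add: power2_eq_iff_nonneg)
  qed
  also have "\<dots> \<longleftrightarrow> (\<forall>i j. i \<noteq> j \<longrightarrow> \<bar>x$i\<bar> * \<bar>x$j\<bar> = 0)"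
  proof -
    have "D = 0 \<longleftrightarrow> (\<forall>i. (\<Sum>j\<in>UNIV. if i = j then 0 else \<bar>x$i\<bar> * \<bar>x$j\<bar>) = 0)"
      unfolding D_def by (subst sum_nonneg_eq_0_iff) (auto intro!: sum_nonneg)
    also have "\<dots> \<longleftrightarrow> (\<forall>i j. (if i = j then 0 else \<bar>x$i\<bar> * \<bar>x$j\<bar>) = (0::real))"
      by (subst sum_nonneg_eq_0_iff) auto
    finally show ?thesis by auto
  qed
  also have "\<dots> \<longleftrightarrow> card {i. x$i \<noteq> 0} \<le> 1"
    by (subst One_nat_def, subst card_le_Suc0_iff_eq) auto
  finally show ?thesis .
qed

lemma infnorm_attained: "\<exists>k. \<bar>(y::real^'n)$k\<bar> = infnorm y"
proof -
  have e: "{\<bar>y$i\<bar> |i. i\<in>UNIV} = range (\<lambda>i. \<bar>y$i\<bar>)" by auto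
  have "infnorm y = Max (range (\<lambda>i. \<bar>y$i\<bar>))"
    unfolding infnorm_cart e by (rule cSup_eq_Max) auto
  moreover have "Max (range (\<lambda>i. \<bar>y$i\<bar>)) \<in> range (\<lambda>i. \<bar>y$i\<bar>)"
    by (rule Max_in) auto
  ultimately show ?thesis by (metis (no_types, lifting) imageE)
qed

lemma coord:
  fixes a b m :: real
  assumes "\<bar>b\<bar> \<le> m"
  shows "a * b = m * \<bar>a\<bar> \<longleftrightarrow> a * b \<ge> 0 \<and> (\<bar>b\<bar> < m \<longrightarrow> a = 0)"
proof (cases "a = 0")
  case False
  have "\<bar>a * b\<bar> = \<bar>a\<bar> * \<bar>b\<bar>" by (simp add: abs_mult)
  moreover have "\<bar>a\<bar> > 0" using False by simp
  ultimately show ?thesis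
  proof (intro iffI conjI impI)
    assume h: "a * b = m * \<bar>a\<bar>"
    have m0: "m \<ge> 0" using assms by linarith
    then show "a * b \<ge> 0" using h by simp
    assume "\<bar>b\<bar> < m"
    then have "\<bar>a\<bar> * \<bar>b\<bar> < \<bar>a\<bar> * m" using False by simp
    moreover have "\<bar>a * b\<bar> = m * \<bar>a\<bar>" using h m0 by simp
    then have "\<bar>a\<bar> * \<bar>b\<bar> = \<bar>a\<bar> * m" by (metis abs_mult mult.commute)
    ultimately show "a = 0" by linarith
  next
    assume h: "a * b \<ge> 0 \<and> (\<bar>b\<bar> < m \<longrightarrow> a = 0)"
    then have "\<bar>b\<bar> = m" using False assms by linarith
    moreover have "a * b = \<bar>a * b\<bar>" using h by simp
    ultimately show "a * b = m * \<bar>a\<bar>" by (simp add: abs_mult mult.commute)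
  qed
qed simp

lemma norm1_axis: "norm1 (axis k c :: real^'n) = \<bar>c\<bar>"
  unfolding norm1_def axis_def by (simp add: if_distrib[of abs] cong: if_cong)

lemma axis_scale: "axis k c = c *\<^sub>R (axis k 1 :: real^'n)"
  by (simp add: vec_eq_iff axis_def)

lemma norm_axis_c: "norm (axis k c :: real^'n) = \<bar>c\<bar>"
  by (subst axis_scale) simp



lemma soft_nth: "soft y \<beta> $ i = (if y $ i > \<beta> then y $ i - \<beta> else if \<bar>y $ i\<bar> \<le> \<beta> then 0 else y $ i + \<beta>)"
  by (simp add: soft_def)

lemma soft_props:
  fixes v \<beta> :: real
  assumes "\<beta> > 0"
  defines "sv \<equiv> (if v > \<beta> then v - \<beta> else if \<bar>v\<bar> \<le> \<beta> then 0 else v + \<beta>)"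
  shows "\<bar>v - sv\<bar> \<le> \<beta>" "sv * (v - sv) = \<beta> * \<bar>sv\<bar>" "\<bar>v\<bar> > \<beta> \<Longrightarrow> sv \<noteq> 0"
  using assms unfolding sv_def by (auto simp: algebra_simps)

lemma small_case:
  fixes y :: "real^'n"
  assumes "\<beta> > 0" "d > 0" "infnorm y \<le> \<beta>"
    and ts: "ts = (if infnorm y + (\<gamma> - 1) * \<beta> \<le> 0 then 0 else min (infnorm y + (\<gamma> - 1) * \<beta>) d)"
  shows "x \<in> prox (\<lambda>x. ereal \<beta> * rho \<gamma> d x) y \<longleftrightarrow>
    norm x = ts \<and> (\<forall>i. x$i * y$i = infnorm y * \<bar>x$i\<bar>) \<and> (\<beta> - infnorm y) * (norm1 x - norm x) = 0"
proof -
  define m where "m = infnorm y"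
  define A where "A = (\<lambda>x::real^'n. m * norm1 x - inner x y)"
  define B where "B = (\<lambda>x::real^'n. (\<beta> - m) * (norm1 x - norm x))"
  obtain k where k: "\<bar>y$k\<bar> = m" using infnorm_attained m_def by blast
  define s where "s = (if y$k \<ge> 0 then 1 else -1::real)"
  define w where "w = (axis k (s * ts) :: real^'n)"
  have ym: "\<bar>y$i\<bar> \<le> m" for i unfolding m_def by (rule component_le_infnorm_cart)
  have Aeq: "A x = (\<Sum>i\<in>UNIV. m * \<bar>x$i\<bar> - x$i * y$i)" for x
    unfolding A_def norm1_def inner_cart by (simp add: sum_subtractf sum_distrib_left)
  have Aterm: "m * \<bar>x$i\<bar> - x$i * y$i \<ge> 0" for x i
  proof -
    have "x$i * y$i \<le> \<bar>x$i\<bar> * \<bar>y$i\<bar>" by (metis abs_ge_self abs_mult)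
    also have "\<dots> \<le> \<bar>x$i\<bar> * m" using ym[of i] by (simp add: mult_left_mono)
    finally show ?thesis by (simp add: mult.commute)
  qed
  have A0: "A x \<ge> 0" for x unfolding Aeq by (intro sum_nonneg Aterm)
  have Aiff: "A x = 0 \<longleftrightarrow> (\<forall>i. x$i * y$i = m * \<bar>x$i\<bar>)" for x
  proof -
    have "A x = 0 \<longleftrightarrow> (\<forall>i. m * \<bar>x$i\<bar> - x$i * y$i = 0)"
      unfolding Aeq by (subst sum_nonneg_eq_0_iff) (use Aterm in \<open>auto simp: algebra_simps\<close>)
    then show ?thesis by auto
  qed
  have B0: "B x \<ge> 0" for x unfolding B_def using assms(3) norm1_ge[of x] m_def by simp
  have dec: "qf \<beta> \<gamma> y x = A x + B x + ((norm x)\<^sup>2/2 - (m + (\<gamma> - 1) * \<beta>) * norm x)" for x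
    unfolding qf_def A_def B_def by (simp add: algebra_simps)
  have tsn: "ts \<ge> 0" using ts assms by auto
  have sy: "s * y$k = m" using k unfolding s_def by auto
  have s1: "\<bar>s\<bar> = 1" unfolding s_def by auto
  have wn: "norm w = ts" unfolding w_def norm_axis_c using s1 tsn by (simp add: abs_mult)
  have wn1: "norm1 w = ts" unfolding w_def norm1_axis using s1 tsn by (simp add: abs_mult)
  have wi: "inner w y = ts * m" unfolding w_def inner_axis' using sy by (simp add: algebra_simps)
  have Aw: "A w = 0" unfolding A_def wn1 wi by simp
  have Bw: "B w = 0" unfolding B_def wn1 wn by simp
  have "x \<in> prox (\<lambda>x. ereal \<beta> * rho \<gamma> d x) y \<longleftrightarrow> norm x = ts \<and> A x = 0 \<and> B x = 0"
    by (rule prox_decomp[OF assms(1) _ dec A0 B0 Aw Bw wn]) (use assms ts m_def in auto)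
  then show ?thesis unfolding Aiff B_def m_def by simp
qed

lemma big_case:
  fixes y :: "real^'n"
  assumes "\<beta> > 0" "d > 0" "\<gamma> > 0" "infnorm y > \<beta>"
  defines "z \<equiv> soft y \<beta>"
  shows "norm z > 0"
    and "x \<in> prox (\<lambda>x. ereal \<beta> * rho \<gamma> d x) y \<longleftrightarrow> x = (min (norm z + \<beta> * \<gamma>) d / norm z) *\<^sub>R z"
proof -
  obtain k where k: "\<bar>y$k\<bar> = infnorm y" using infnorm_attained by blast
  have "z $ k \<noteq> 0" unfolding z_def soft_nth using soft_props(3)[OF assms(1), of "y$k"] k assms(4) by simp
  then have zne: "z \<noteq> 0" by auto
  then show sp: "norm z > 0" by simp
  define s where "s = norm z"
  define ts where "ts = min (s + \<beta> * \<gamma>) d"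
  define c where "c = ts / s"
  define A where "A = (\<lambda>x::real^'n. \<beta> * norm1 x - inner x y + inner x z)"
  define B where "B = (\<lambda>x::real^'n. norm x * s - inner x z)"
  define w where "w = c *\<^sub>R z"
  have zi: "z$i = (if y $ i > \<beta> then y $ i - \<beta> else if \<bar>y $ i\<bar> \<le> \<beta> then 0 else y $ i + \<beta>)" for i
    unfolding z_def soft_nth ..
  have Aeq: "A x = (\<Sum>i\<in>UNIV. \<beta> * \<bar>x$i\<bar> - x$i * (y$i - z$i))" for x
    unfolding A_def norm1_def inner_cart by (simp add: sum_subtractf sum_distrib_left algebra_simps sum.distrib)
  have Aterm: "\<beta> * \<bar>x$i\<bar> - x$i * (y$i - z$i) \<ge> 0" for x i
  proof -
    have "x$i * (y$i - z$i) \<le> \<bar>x$i\<bar> * \<bar>y$i - z$i\<bar>" by (metis abs_ge_self abs_mult)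
    also have "\<dots> \<le> \<bar>x$i\<bar> * \<beta>" using soft_props(1)[OF assms(1), of "y$i"] zi[of i]
      by (simp add: mult_left_mono)
    finally show ?thesis by (simp add: mult.commute)
  qed
  have A0: "A x \<ge> 0" for x unfolding Aeq by (intro sum_nonneg Aterm)
  have B0: "B x \<ge> 0" for x unfolding B_def s_def using norm_cauchy_schwarz[of x z] by simp
  have dec: "qf \<beta> \<gamma> y x = A x + B x + ((norm x)\<^sup>2/2 - (s + \<beta> * \<gamma>) * norm x)" for x
    unfolding qf_def A_def B_def by (simp add: algebra_simps)
  have spos: "s > 0" using sp s_def by simp
  have tsp: "ts > 0" unfolding ts_def using spos assms by (simp add: add_pos_pos)
  have c0: "c > 0" unfolding c_def using tsp spos by simp
  have wn: "norm w = ts" unfolding w_def c_def using spos tsp s_def by simp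
  have Aw: "A w = 0"
  proof -
    have "\<beta> * \<bar>w$i\<bar> - w$i * (y$i - z$i) = 0" for i
    proof -
      have "z$i * (y$i - z$i) = \<beta> * \<bar>z$i\<bar>" using soft_props(2)[OF assms(1), of "y$i"] zi[of i] by simp
      then show ?thesis unfolding w_def using c0 by (simp add: abs_mult algebra_simps)
    qed
    then show ?thesis unfolding Aeq by simp
  qed
  have Bw: "B w = 0"
  proof -
    have "inner w z = c * s * s" unfolding w_def s_def by (simp add: power2_norm_eq_inner[symmetric] power2_eq_square)
    moreover have "norm w = c * s" unfolding w_def s_def using c0 by simp
    ultimately show ?thesis unfolding B_def by simp
  qed
  have bg: "\<beta> * \<gamma> > 0" using assms by simp
  have tsif: "ts = (if s + \<beta> * \<gamma> \<le> 0 then 0 else min (s + \<beta> * \<gamma>) d)"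
    unfolding ts_def using spos bg by auto
  have P: "x \<in> prox (\<lambda>x. ereal \<beta> * rho \<gamma> d x) y \<longleftrightarrow> norm x = ts \<and> A x = 0 \<and> B x = 0"
    by (rule prox_decomp[OF assms(1) _ dec A0 B0 Aw Bw wn tsif]) (use assms in auto)
  have "x \<in> prox (\<lambda>x. ereal \<beta> * rho \<gamma> d x) y \<longleftrightarrow> x = w"
  proof
    assume "x \<in> prox (\<lambda>x. ereal \<beta> * rho \<gamma> d x) y"
    then have h: "norm x = ts" "B x = 0" using P by auto
    then have "inner x z = norm x * norm z" unfolding B_def s_def by simp
    then have "norm x *\<^sub>R z = norm z *\<^sub>R x" by (simp add: norm_cauchy_schwarz_eq)
    then have "ts *\<^sub>R z = s *\<^sub>R x" using h s_def by simp
    then have "(ts / s) *\<^sub>R z = x" using spos by (metis divide_inverse_commute scaleR_scaleR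
        inverse_eq_divide divide_self_if less_irrefl scaleR_one mult.commute)
    then show "x = w" unfolding w_def c_def by simp
  next
    assume "x = w" then show "x \<in> prox (\<lambda>x. ereal \<beta> * rho \<gamma> d x) y" using P wn Aw Bw by simp
  qed
  then show "x \<in> prox (\<lambda>x. ereal \<beta> * rho \<gamma> d x) y \<longleftrightarrow> x = (min (norm z + \<beta> * \<gamma>) d / norm z) *\<^sub>R z"
    unfolding w_def c_def ts_def s_def .
qed



theorem mainTheorem6:
  fixes y :: "real^'n" and \<beta> \<gamma> d :: real
  assumes "\<beta> > 0" and "\<gamma> > 0" and "d > 0"
  defines "P \<equiv> prox (\<lambda>x. ereal \<beta> * rho \<gamma> d x) y"
  shows
    "(infnorm y > \<beta> \<longrightarrow>
       (let z = (soft y \<beta> :: real^'n) in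
          P = {if norm z \<le> d - \<beta> * \<gamma> then ((norm z + \<beta> * \<gamma>) / norm z) *\<^sub>R z
               else (d / norm z) *\<^sub>R z}))
   \<and> (infnorm y = \<beta> \<longrightarrow>
       (\<forall>xs. xs \<in> P \<longleftrightarrow>
          norm xs = min (\<beta> * \<gamma>) d
          \<and> (\<forall>i. \<bar>y $ i\<bar> < \<beta> \<longrightarrow> xs $ i = 0)
          \<and> (\<forall>i. \<bar>y $ i\<bar> = \<beta> \<longrightarrow> xs $ i * y $ i \<ge> 0)))
   \<and> ((1 - \<gamma>) * \<beta> < infnorm y \<and> infnorm y < \<beta> \<longrightarrow>
       (\<forall>xs. xs \<in> P \<longleftrightarrow>
          card {i. xs $ i \<noteq> 0} \<le> 1
          \<and> norm xs = min (infnorm y + (\<gamma> - 1) * \<beta>) d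
          \<and> (\<forall>i. xs $ i * y $ i \<ge> 0)
          \<and> (\<forall>i. \<bar>y $ i\<bar> < infnorm y \<longrightarrow> xs $ i = 0)))
   \<and> (infnorm y \<le> (1 - \<gamma>) * \<beta> \<longrightarrow> P = {0})"
proof (intro conjI impI)
  assume h: "infnorm y > \<beta>"
  define z where "z = soft y \<beta>"
  have e: "(if norm z \<le> d - \<beta> * \<gamma> then ((norm z + \<beta> * \<gamma>) / norm z) *\<^sub>R z
               else (d / norm z) *\<^sub>R z) = (min (norm z + \<beta> * \<gamma>) d / norm z) *\<^sub>R z"
    by auto
  show "let z = (soft y \<beta> :: real^'n) in
          P = {if norm z \<le> d - \<beta> * \<gamma> then ((norm z + \<beta> * \<gamma>) / norm z) *\<^sub>R z
               else (d / norm z) *\<^sub>R z}"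
    unfolding Let_def z_def[symmetric] e P_def
    using big_case(2)[OF assms(1,3,2) h] z_def by auto
next
  assume h: "infnorm y = \<beta>"
  have ts: "min (\<beta> * \<gamma>) d = (if infnorm y + (\<gamma> - 1) * \<beta> \<le> 0 then 0 else min (infnorm y + (\<gamma> - 1) * \<beta>) d)"
    using h mult_pos_pos[OF assms(2,1)] by (auto simp: algebra_simps)
  have yb: "\<bar>y$i\<bar> \<le> \<beta>" for i using h component_le_infnorm_cart[of y i] by simp
  show "\<forall>xs. xs \<in> P \<longleftrightarrow>
          norm xs = min (\<beta> * \<gamma>) d
          \<and> (\<forall>i. \<bar>y $ i\<bar> < \<beta> \<longrightarrow> xs $ i = 0)
          \<and> (\<forall>i. \<bar>y $ i\<bar> = \<beta> \<longrightarrow> xs $ i * y $ i \<ge> 0)"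
  proof
    fix xs :: "real^'n"
    have c: "(\<forall>i. xs$i * y$i = \<beta> * \<bar>xs$i\<bar>) \<longleftrightarrow>
      (\<forall>i. \<bar>y $ i\<bar> < \<beta> \<longrightarrow> xs $ i = 0) \<and> (\<forall>i. \<bar>y $ i\<bar> = \<beta> \<longrightarrow> xs $ i * y $ i \<ge> 0)"
      using coord[OF yb] yb by (metis abs_le_iff mult_zero_left order_le_less)
    show "xs \<in> P \<longleftrightarrow> norm xs = min (\<beta> * \<gamma>) d
          \<and> (\<forall>i. \<bar>y $ i\<bar> < \<beta> \<longrightarrow> xs $ i = 0)
          \<and> (\<forall>i. \<bar>y $ i\<bar> = \<beta> \<longrightarrow> xs $ i * y $ i \<ge> 0)"
      unfolding P_def small_case[OF assms(1,3) _ ts, OF eq_refl[OF h]] using h c by simp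
  qed
next
  assume h: "(1 - \<gamma>) * \<beta> < infnorm y \<and> infnorm y < \<beta>"
  have ts: "min (infnorm y + (\<gamma> - 1) * \<beta>) d = (if infnorm y + (\<gamma> - 1) * \<beta> \<le> 0 then 0 else min (infnorm y + (\<gamma> - 1) * \<beta>) d)"
    using h by (auto simp: algebra_simps)
  have yb: "\<bar>y$i\<bar> \<le> infnorm y" for i using component_le_infnorm_cart[of y i] by simp
  show "\<forall>xs. xs \<in> P \<longleftrightarrow>
          card {i. xs $ i \<noteq> 0} \<le> 1
          \<and> norm xs = min (infnorm y + (\<gamma> - 1) * \<beta>) d
          \<and> (\<forall>i. xs $ i * y $ i \<ge> 0)
          \<and> (\<forall>i. \<bar>y $ i\<bar> < infnorm y \<longrightarrow> xs $ i = 0)"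
  proof
    fix xs :: "real^'n"
    have c: "(\<forall>i. xs$i * y$i = infnorm y * \<bar>xs$i\<bar>) \<longleftrightarrow>
      (\<forall>i. xs $ i * y $ i \<ge> 0) \<and> (\<forall>i. \<bar>y $ i\<bar> < infnorm y \<longrightarrow> xs $ i = 0)"
      using coord[OF yb] by blast
    have b: "(\<beta> - infnorm y) * (norm1 xs - norm xs) = 0 \<longleftrightarrow> card {i. xs $ i \<noteq> 0} \<le> 1"
      using h norm1_eq_iff[of xs] by auto
    show "xs \<in> P \<longleftrightarrow> card {i. xs $ i \<noteq> 0} \<le> 1
          \<and> norm xs = min (infnorm y + (\<gamma> - 1) * \<beta>) d
          \<and> (\<forall>i. xs $ i * y $ i \<ge> 0)
          \<and> (\<forall>i. \<bar>y $ i\<bar> < infnorm y \<longrightarrow> xs $ i = 0)"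
      unfolding P_def small_case[OF assms(1,3) less_imp_le[OF conjunct2[OF h]] ts] using h c b by auto
  qed
next
  assume h: "infnorm y \<le> (1 - \<gamma>) * \<beta>"
  have "(1 - \<gamma>) * \<beta> \<le> \<beta>" using assms by (simp add: algebra_simps)
  then have hb: "infnorm y \<le> \<beta>" using h by linarith
  have ts: "0 = (if infnorm y + (\<gamma> - 1) * \<beta> \<le> 0 then 0 else min (infnorm y + (\<gamma> - 1) * \<beta>) d)"
    using h by (auto simp: algebra_simps)
  have n10: "norm1 (0::real^'n) = 0" unfolding norm1_def by simp
  show "P = {0}"
    unfolding P_def using small_case[OF assms(1,3) hb ts] n10 by auto
qed

end
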